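(* For all $k,\ell\in\mathbb Z$, in $\mathbb C_w[x,x^{-1},y,y^{-1}]$, \[ y^k x^\ell=\Big(\prod_{i=1}^\ell\prod_{j=1}^k w(i,j)\Big)x^\ell y^k=\Big(\prod_{i=1}^\ell W(i,k)\Big)x^\ell y^k . \]
   Context: Let $(w(s,t))_{s,t\in\mathbb Z}$ be commuting invertible variables. $\mathbb C_w[x,x^{-1},y,y^{-1}]$ is the associative unital $\mathbb C$-algebra generated by $x,x^{-1},y,y^{-1}$ and the $w(s,t)^{\pm1}$ subject to $x^{-1}x=xx^{-1}=1$, $y^{-1}y=yy^{-1}=1$, $yx=w(1,1)xy$, $x\,w(s,t)=w(s+1,t)\,x$, $y\,w(s,t)=w(s,t+1)\,y$ for all $s,t\in\mathbb Z$. Product convention: $\prod_{j=l}^m A_j=A_l\cdots A_m$ if $m>l-1$, $=1$ if $m=l-1$, $=A_{l-1}^{-1}A_{l-2}^{-1}\cdots A_{m+1}^{-1}$ if $m<l-1$. $W(s,t)=\prod_{j=1}^t w(s,j)$. *)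

theory Defs
  imports Main
begin

(* two-sided inverse of an element of a ring (meaningful only for units) *)
definition uinv :: "'a::ring_1 \<Rightarrow> 'a" where
  "uinv a = (THE b. a * b = 1 \<and> b * a = 1)"

definition zpow :: "'a::ring_1 \<Rightarrow> int \<Rightarrow> 'a" where
  "zpow a n = (if n \<ge> 0 then a ^ nat n else uinv a ^ nat (- n))"

(* the paper's product convention:
   prod_{j=l}^m A_j = A_l ... A_m                          if m > l - 1
                    = 1                                    if m = l - 1
                    = A_{l-1}^{-1} A_{l-2}^{-1} ... A_{m+1}^{-1}  if m < l - 1 *)
definition prodZ :: "(int \<Rightarrow> 'a::ring_1) \<Rightarrow> int \<Rightarrow> int \<Rightarrow> 'a" where
  "prodZ A l m =
     (if m \<ge> l - 1 then prod_list (map A [l..m])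
      else prod_list (map (\<lambda>j. uinv (A j)) (rev [m+1..l-1])))"

definition Wf :: "(int \<Rightarrow> int \<Rightarrow> 'a::ring_1) \<Rightarrow> int \<Rightarrow> int \<Rightarrow> 'a" where
  "Wf w s t = prodZ (\<lambda>j. w s j) 1 t"

end

theory Submission
  imports Defs
begin

definition isu :: "'a::ring_1 \<Rightarrow> bool" where
  "isu a = (\<exists>v. a * v = 1 \<and> v * a = 1)"

lemma uinv_props:
  assumes "isu a" shows "a * uinv a = 1" "uinv a * a = 1"
proof -
  obtain v where v: "a * v = 1" "v * a = 1" using assms unfolding isu_def by blast
  have u: "b = v" if h: "a * b = 1 \<and> b * a = 1" for b
  proof -
    have "b = (v * a) * b" using v(2) by simp
    also have "\<dots> = v * (a * b)" by (simp only: mult.assoc)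
    also have "\<dots> = v" using h by simp
    finally show "b = v" .
  qed
  have "uinv a = v" unfolding uinv_def
  proof (rule the_equality)
    show "a * v = 1 \<and> v * a = 1" using v by blast
    show "\<And>b. a * b = 1 \<and> b * a = 1 \<Longrightarrow> b = v" by (rule u)
  qed
  then show "a * uinv a = 1" "uinv a * a = 1" using v by auto
qed

lemma cancel_r: assumes "isu b" "p * b = q * b" shows "p = q"
proof -
  have "p * b * uinv b = q * b * uinv b" using assms by simp
  then show ?thesis using uinv_props[OF assms(1)] by (simp add: mult.assoc)
qed

lemma cancel_l: assumes "isu b" "b * p = b * q" shows "p = q"
proof -
  have "uinv b * (b * p) = uinv b * (b * q)" using assms by simp
  then show ?thesis using uinv_props[OF assms(1)] by (simp add: mult.assoc[symmetric])
qed

lemma int_bi_induct: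
  fixes k :: int
  assumes "P k" "\<And>i. P i \<Longrightarrow> P (i+1)" "\<And>i. P (i+1) \<Longrightarrow> P i"
  shows "P n"
proof (rule int_induct[of P k])
  show "P k" by fact
  show "\<And>i. k \<le> i \<Longrightarrow> P i \<Longrightarrow> P (i + 1)" using assms(2) by blast
  show "\<And>i. i \<le> k \<Longrightarrow> P i \<Longrightarrow> P (i - 1)" using assms(3) by (metis diff_add_cancel)
qed

lemma prodZ_base: "prodZ A l (l - 1) = 1"
  unfolding prodZ_def by simp

lemma prodZ_base0: "prodZ A 1 0 = 1"
  unfolding prodZ_def by simp

lemma prodZ_rec:
  assumes "isu (A (m+1))"
  shows "prodZ A l (m+1) = prodZ A l m * A (m+1)"
proof (cases "m \<ge> l - 1")
  case True
  then have "[l..m+1] = [l..m] @ [m+1]" using upto_rec2[of l "m+1"] by simp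
  then show ?thesis using True unfolding prodZ_def by simp
next
  case False
  show ?thesis
  proof (cases "m + 1 = l - 1")
    case True
    then have l: "l = m + 2" by simp
    have e: "[m+1..m+1] = [m+1]" by simp
    have "prodZ A (m+2) m = uinv (A (m+1))" unfolding prodZ_def using e by (simp add: add.commute)
    moreover have "prodZ A (m+2) (m+1) = 1" unfolding prodZ_def by simp
    ultimately show ?thesis using l uinv_props(2)[OF assms] by simp
  next
    case F2: False
    then have "[m+1..l-1] = (m+1) # [m+1+1..l-1]" using False upto_rec1[of "m+1" "l-1"] by simp
    then show ?thesis using False F2 uinv_props(2)[OF assms] unfolding prodZ_def
      by (simp add: mult.assoc)
  qed
qed

lemma zpow_0: "zpow a 0 = 1" unfolding zpow_def by simp

lemma zpow_rec:
  assumes "isu a"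
  shows "zpow a (n+1) = zpow a n * a"
proof (cases "n \<ge> 0")
  case True
  then have "nat (n+1) = Suc (nat n)" by simp
  then show ?thesis using True unfolding zpow_def by (simp add: power_Suc2 power_commutes)
next
  case False
  show ?thesis
  proof (cases "n = -1")
    case True
    then show ?thesis using uinv_props(2)[OF assms] unfolding zpow_def by simp
  next
    case F2: False
    then have "nat (-n) = Suc (nat (-(n+1)))" using False by simp
    then show ?thesis using False F2 uinv_props(2)[OF assms] unfolding zpow_def
      by (simp del: power_Suc add: power_Suc2 mult.assoc)
  qed
qed

lemma shift_prodZ:
  assumes "\<And>j. a * f j = g j * a" "\<And>j. isu (f j)" "\<And>j. isu (g j)"
  shows "a * prodZ f l m = prodZ g l m * a"
proof (induction m rule: int_bi_induct[where k="l - 1"])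
  case 1
  then show ?case by (simp add: prodZ_base)
next
  case (2 i)
  have "a * prodZ f l (i+1) = a * prodZ f l i * f (i+1)"
    by (simp add: prodZ_rec assms mult.assoc)
  also have "\<dots> = prodZ g l i * (a * f (i+1))" using 2 by (simp add: mult.assoc)
  also have "\<dots> = prodZ g l (i+1) * a" by (simp add: assms prodZ_rec mult.assoc)
  finally show ?case .
next
  case (3 i)
  have "(a * prodZ f l i) * f (i+1) = a * prodZ f l (i+1)"
    by (simp add: prodZ_rec assms mult.assoc)
  also have "\<dots> = prodZ g l (i+1) * a" using 3 .
  also have "\<dots> = prodZ g l i * (g (i+1) * a)" by (simp add: assms prodZ_rec mult.assoc)
  also have "\<dots> = (prodZ g l i * a) * f (i+1)" by (simp add: assms mult.assoc)
  finally show ?case using cancel_r assms(2) by blast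
qed

lemma isu_mult: "isu a \<Longrightarrow> isu b \<Longrightarrow> isu (a * b)"
  unfolding isu_def
proof (elim exE conjE)
  fix u v assume h: "a * u = 1" "u * a = 1" "b * v = 1" "v * b = 1"
  have "a * b * (v * u) = a * (b * v) * u" by (simp only: mult.assoc)
  then have 1: "a * b * (v * u) = 1" using h by simp
  have "v * u * (a * b) = v * (u * a) * b" by (simp only: mult.assoc)
  then have 2: "v * u * (a * b) = 1" using h by simp
  from 1 2 show "\<exists>c. a * b * c = 1 \<and> c * (a * b) = 1" by blast
qed

lemma isu_uinv: "isu a \<Longrightarrow> isu (uinv a)"
  using uinv_props unfolding isu_def by blast

lemma prodZ_unit:
  assumes "\<And>j. isu (A j)"
  shows "isu (prodZ A l m)"
proof (induction m rule: int_bi_induct[where k="l - 1"])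
  case 1 then show ?case by (simp add: prodZ_base isu_def)
next
  case (2 i) then show ?case by (simp add: prodZ_rec assms isu_mult)
next
  case (3 i)
  have "prodZ A l i = prodZ A l (i+1) * uinv (A (i+1))"
    using uinv_props(1)[OF assms] by (simp add: prodZ_rec assms mult.assoc)
  then show ?case using 3 isu_mult isu_uinv assms by metis
qed

theorem lemma2:
  fixes x y :: "'a::ring_1" and w :: "int \<Rightarrow> int \<Rightarrow> 'a" and k l :: int
  assumes x_unit: "\<exists>v. x * v = 1 \<and> v * x = 1"
    and y_unit: "\<exists>v. y * v = 1 \<and> v * y = 1"
    and w_unit: "\<And>s t. \<exists>v. w s t * v = 1 \<and> v * w s t = 1"
    and w_comm: "\<And>s t s' t'. w s t * w s' t' = w s' t' * w s t"
    and yx: "y * x = w 1 1 * x * y"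
    and xw: "\<And>s t. x * w s t = w (s + 1) t * x"
    and yw: "\<And>s t. y * w s t = w s (t + 1) * y"
  shows "zpow y k * zpow x l
           = prodZ (\<lambda>i. prodZ (\<lambda>j. w i j) 1 k) 1 l * zpow x l * zpow y k
       \<and> prodZ (\<lambda>i. prodZ (\<lambda>j. w i j) 1 k) 1 l * zpow x l * zpow y k
           = prodZ (\<lambda>i. Wf w i k) 1 l * zpow x l * zpow y k"
proof -
  have xu: "isu x" using x_unit unfolding isu_def .
  have yu: "isu y" using y_unit unfolding isu_def .
  have wu: "\<And>s t. isu (w s t)" using w_unit unfolding isu_def .
  have A: "zpow x l' * w s t = w (s + l') t * zpow x l'" for l' s t
  proof (induction l' arbitrary: s rule: int_bi_induct[where k=0])
    case 1 then show ?case by (simp add: zpow_0)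
  next
    case (2 i)
    have "zpow x (i+1) * w s t = zpow x i * (x * w s t)" by (simp add: zpow_rec xu mult.assoc)
    also have "\<dots> = (zpow x i * w (s+1) t) * x" by (simp add: xw mult.assoc)
    also have "\<dots> = w (s + (i+1)) t * zpow x i * x" using 2[of "s+1"]
      by (simp add: add_ac)
    also have "\<dots> = w (s + (i+1)) t * zpow x (i+1)"
      by (simp add: zpow_rec xu mult.assoc)
    finally show ?case .
  next
    case (3 i)
    have "(zpow x i * w s t) * x = zpow x i * (w (s - 1 + 1) t * x)" by (simp only: diff_add_cancel mult.assoc)
    also have "\<dots> = zpow x (i+1) * w (s-1) t" by (simp only: xw[symmetric] zpow_rec[OF xu] mult.assoc)
    also have "\<dots> = w (s + i) t * zpow x (i+1)" using 3[of "s-1"] by (simp add: add_ac)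
    also have "\<dots> = (w (s + i) t * zpow x i) * x" by (simp add: zpow_rec xu mult.assoc)
    finally show ?case using cancel_r xu by blast
  qed
  have A': "zpow y k' * w s t = w s (t + k') * zpow y k'" for k' s t
  proof (induction k' arbitrary: t rule: int_bi_induct[where k=0])
    case 1 then show ?case by (simp add: zpow_0)
  next
    case (2 i)
    have "zpow y (i+1) * w s t = zpow y i * (y * w s t)" by (simp add: zpow_rec yu mult.assoc)
    also have "\<dots> = (zpow y i * w s (t+1)) * y" by (simp add: yw mult.assoc)
    also have "\<dots> = w s (t + (i+1)) * zpow y i * y" using 2[of "t+1"]
      by (simp add: add_ac)
    also have "\<dots> = w s (t + (i+1)) * zpow y (i+1)"
      by (simp add: zpow_rec yu mult.assoc)
    finally show ?case .
  next
    case (3 i)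
    have "(zpow y i * w s t) * y = zpow y i * (w s (t - 1 + 1) * y)" by (simp only: diff_add_cancel mult.assoc)
    also have "\<dots> = zpow y (i+1) * w s (t-1)" by (simp only: yw[symmetric] zpow_rec[OF yu] mult.assoc)
    also have "\<dots> = w s (t + i) * zpow y (i+1)" using 3[of "t-1"] by (simp add: add_ac)
    also have "\<dots> = (w s (t + i) * zpow y i) * y" by (simp add: zpow_rec yu mult.assoc)
    finally show ?case using cancel_r yu by blast
  qed
  have B: "zpow x l' * Wf w s k' = Wf w (s + l') k' * zpow x l'" for l' s k'
    unfolding Wf_def by (rule shift_prodZ) (auto simp: A wu)
  have Wc: "w s t * Wf w s' k' = Wf w s' k' * w s t" for s t s' k'
    unfolding Wf_def by (rule shift_prodZ) (auto simp: w_comm wu)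
  have Wrec: "Wf w s (k'+1) = Wf w s k' * w s (k'+1)" for s k'
    unfolding Wf_def by (simp add: prodZ_rec wu)
  have Wu: "isu (Wf w s k')" for s k'
    unfolding Wf_def by (rule prodZ_unit) (simp add: wu)
  have C: "zpow y k' * x = Wf w 1 k' * x * zpow y k'" for k'
  proof (induction k' rule: int_bi_induct[where k=0])
    case 1 then show ?case by (simp add: zpow_0 Wf_def prodZ_base0)
  next
    case (2 i)
    have "zpow y (i+1) * x = zpow y i * (y * x)" by (simp add: zpow_rec yu mult.assoc)
    also have "\<dots> = (zpow y i * w 1 1) * x * y" by (simp add: yx mult.assoc)
    also have "\<dots> = w 1 (i+1) * (zpow y i * x) * y" by (simp add: A' mult.assoc add_ac)
    also have "\<dots> = (w 1 (i+1) * Wf w 1 i) * x * (zpow y i * y)" using 2 by (simp add: mult.assoc)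
    also have "\<dots> = Wf w 1 (i+1) * x * zpow y (i+1)" by (simp add: Wc Wrec zpow_rec yu)
    finally show ?case .
  next
    case (3 i)
    have "w 1 (i+1) * ((zpow y i * x) * y) = (zpow y i * w 1 1) * x * y"
      by (simp add: A' mult.assoc add_ac)
    also have "\<dots> = zpow y (i+1) * x" by (simp add: yx zpow_rec yu mult.assoc)
    also have "\<dots> = Wf w 1 (i+1) * x * zpow y (i+1)" using 3 .
    also have "\<dots> = (w 1 (i+1) * Wf w 1 i) * x * (zpow y i * y)"
      by (simp add: Wc Wrec zpow_rec yu)
    also have "\<dots> = w 1 (i+1) * ((Wf w 1 i * x * zpow y i) * y)"
      by (simp add: mult.assoc)
    finally have "(zpow y i * x) * y = (Wf w 1 i * x * zpow y i) * y"
      using cancel_l wu by blast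
    then show ?case using cancel_r yu by blast
  qed
  have Bi: "zpow x i * Wf w 1 k = Wf w (i+1) k * zpow x i" for i
    using B[of i 1 k] by (simp add: add.commute)
  have D: "zpow y k * zpow x l' = prodZ (\<lambda>i. Wf w i k) 1 l' * zpow x l' * zpow y k" for l'
  proof (induction l' rule: int_bi_induct[where k=0])
    case 1 then show ?case by (simp add: zpow_0 prodZ_base0)
  next
    case (2 i)
    have "zpow y k * zpow x (i+1) = (zpow y k * zpow x i) * x" by (simp add: zpow_rec xu mult.assoc)
    also have "\<dots> = prodZ (\<lambda>i. Wf w i k) 1 i * zpow x i * (zpow y k * x)"
      using 2 by (simp add: mult.assoc)
    also have "\<dots> = prodZ (\<lambda>i. Wf w i k) 1 i * (zpow x i * Wf w 1 k) * x * zpow y k"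
      using C by (simp add: mult.assoc)
    also have "\<dots> = prodZ (\<lambda>i. Wf w i k) 1 (i+1) * zpow x (i+1) * zpow y k"
      using Bi[of i] by (simp add: prodZ_rec Wu zpow_rec xu mult.assoc)
    finally show ?case .
  next
    case (3 i)
    have "(zpow y k * zpow x i) * x = zpow y k * zpow x (i+1)" by (simp add: zpow_rec xu mult.assoc)
    also have "\<dots> = prodZ (\<lambda>i. Wf w i k) 1 (i+1) * zpow x (i+1) * zpow y k" using 3 .
    also have "\<dots> = prodZ (\<lambda>i. Wf w i k) 1 i * (zpow x i * Wf w 1 k) * x * zpow y k"
      using Bi[of i] by (simp add: prodZ_rec Wu zpow_rec xu mult.assoc)
    also have "\<dots> = (prodZ (\<lambda>i. Wf w i k) 1 i * zpow x i * zpow y k) * x"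
      using C by (simp add: mult.assoc)
    finally show ?case using cancel_r xu by blast
  qed
  show ?thesis using D[of l] unfolding Wf_def by simp
qed

end
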